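(* Let $d\ge 1$ and $N\ge 1$, and let $(X_1,Y_1),\dots,(X_N,Y_N),(X_{test},Y_{test})$ be i.i.d. random variables with values in $\mathbb{R}^d\times\mathbb{R}$ and common (unknown) distribution $P_{XY}$. Let $f:\mathbb{R}^d\to\mathbb{R}$ be a fixed point-prediction model (intended as an approximation of $\mathrm{E}(Y\mid X)$), and set $A_n=(f(X_n)-Y_n)^2$ for $n=1,\dots,N$ and $A_{test}=(f(X_{test})-Y_{test})^2$. Let $\{\phi_x:\mathbb{R}_+\to\mathcal{B}_x\}_{x\in\mathbb{R}^d}$ be a family of differentiable functions such that (i) $\phi_x'(a)>0$ for all $x\in\mathbb{R}^d$ and all $a\in\mathbb{R}_+$, and (ii) $\mathcal{B}_x=\phi_x(\mathbb{R}_+)$ is the same set for all $x\in\mathbb{R}^d$. Let $B_n=\phi_{X_n}(A_n)$, $n=1,\dots,N$, and assume $B_n\neq B_{n'}$ whenever $n\neq n'$. Then there is a permutation $(m_1,\dots,m_N)$ of $\{1,\dots,N\}$ with $B_{m_1}<\dots<B_{m_N}$, and for every $\alpha\in[\frac{1}{N+1},1)$, setting $k=\lceil (N+1)(1-\alpha)\rceil$ (so $1\le k\le N$), the interval $$C=[f(X_{test})-\Delta,\ f(X_{test})+\Delta],\qquad \Delta=\sqrt{\phi_{X_{test}}^{-1}\big(B_{m_k}\big)},$$ where $\phi_{X_{test}}^{-1}:\mathcal{B}_{X_{test}}\to\mathbb{R}_+$ is the inverse of $\phi_{X_{test}}$, satisfies $$\mathrm{Prob}\big(Y_{test}\in C\big)\ge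 1-\alpha .$$
   Context: $\mathbb{R}_+=[0,\infty)$ denotes the set of possible values of the base conformity score $a(f(X),Y)=(f(X)-Y)^2$. The functions $\phi_x$ are attribute-dependent transformations of this conformity score; $B_n=\phi_{X_n}(A_n)$ are the transformed conformity scores of the calibration samples, and $B_{m_k}$ is the $k$-th smallest of them. "Marginally valid with confidence $1-\alpha$" means $\mathrm{Prob}(Y_{test}\in C)\ge 1-\alpha$, the probability being over all $N+1$ samples jointly. *)

theory Defs
  imports "HOL-Probability.Probability"
begin

definition tscore :: "('d \<Rightarrow> real) \<Rightarrow> ('d \<Rightarrow> real \<Rightarrow> real) \<Rightarrow> 'd \<Rightarrow> real \<Rightarrow> real" where
  "tscore f \<phi> x y = \<phi> x ((f x - y)\<^sup>2)"

definition sorting_perm :: "nat \<Rightarrow> (nat \<Rightarrow> real) \<Rightarrow> (nat \<Rightarrow> nat) \<Rightarrow> bool" where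
  "sorting_perm N B m \<longleftrightarrow> bij_betw m {1..N} {1..N} \<and>
     (\<forall>i j. 1 \<le> i \<longrightarrow> i < j \<longrightarrow> j \<le> N \<longrightarrow> B (m i) < B (m j))"

end

theory Submission imports Defs begin


lemma phi_strict:
  fixes g g' :: "real \<Rightarrow> real"
  assumes d: "\<forall>a\<ge>0. (g has_real_derivative g' a) (at a within {0..}) \<and> g' a > 0"
    and ab: "0 \<le> a" "a < b"
  shows "g a < g b"
proof (rule DERIV_pos_imp_increasing_open[OF ab(2)])
  fix x assume x: "a < x" "x < b"
  have "at x within {0..} = at x"
    using x ab by (intro at_within_interior) (auto simp: interior_real_atLeast)
  moreover have "(g has_real_derivative g' x) (at x within {0..})" "g' x > 0" using d x ab by auto
  ultimately show "\<exists>y. DERIV g x :> y \<and> y > 0" by auto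
next
  have "continuous_on {0..} g"
    using d by (auto simp: continuous_on_eq_continuous_within intro: DERIV_continuous)
  then show "continuous_on {a..b} g" by (rule continuous_on_subset) (use ab in auto)
qed

lemma phi_mono_iff:
  fixes g g' :: "real \<Rightarrow> real"
  assumes d: "\<forall>a\<ge>0. (g has_real_derivative g' a) (at a within {0..}) \<and> g' a > 0"
    and ab: "0 \<le> a" "0 \<le> b"
  shows "g a \<le> g b \<longleftrightarrow> a \<le> b"
proof
  assume "g a \<le> g b" then show "a \<le> b" using phi_strict[OF d, of b a] ab by force
next
  assume "a \<le> b" then show "g a \<le> g b" using phi_strict[OF d, of a b] ab by (cases "a = b") auto
qed

lemma count_ge:
  fixes v :: "'i \<Rightarrow> real"
  assumes fin: "finite I" and kI: "k \<le> card I"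
  shows "k \<le> card {i\<in>I. card {j\<in>I. v j < v i} < k}"
proof (cases "I - {i\<in>I. card {j\<in>I. v j < v i} < k} = {}")
  case True
  then have "{i\<in>I. card {j\<in>I. v j < v i} < k} = I" by blast
  then show ?thesis using kI by simp
next
  case False
  define S where "S = {i\<in>I. card {j\<in>I. v j < v i} < k}"
  have ne: "v ` (I - S) \<noteq> {}" using False unfolding S_def by blast
  have fn: "finite (v ` (I - S))" using fin by blast
  have "Min (v ` (I - S)) \<in> v ` (I - S)" by (rule Min_in[OF fn ne])
  then obtain i0 where i0: "i0 \<in> I - S" "v i0 = Min (v ` (I - S))"
    by (metis imageE)
  have sub: "{j\<in>I. v j < v i0} \<subseteq> S"
  proof
    fix j assume j: "j \<in> {j\<in>I. v j < v i0}"
    show "j \<in> S"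
    proof (rule ccontr)
      assume "j \<notin> S"
      then have "j \<in> I - S" using j by blast
      then have "Min (v ` (I - S)) \<le> v j" using fn by (intro Min_le) auto
      then show False using j i0(2) by simp
    qed
  qed
  have "\<not> card {j\<in>I. v j < v i0} < k" using i0(1) unfolding S_def by blast
  then have "k \<le> card {j\<in>I. v j < v i0}" by simp
  also have "\<dots> \<le> card S" using sub fin unfolding S_def by (intro card_mono) auto
  finally show ?thesis unfolding S_def .
qed


lemma sorting_exists:
  fixes B :: "nat \<Rightarrow> real"
  assumes inj: "\<forall>n\<in>{1..N}. \<forall>n'\<in>{1..N}. n \<noteq> n' \<longrightarrow> B n \<noteq> B n'"
  shows "\<exists>m. sorting_perm N B m"
proof -
  define r where "r j = card {j'\<in>{1..N}. B j' \<le> B j}" for j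
  have mono: "r a \<le> r b" if "B a \<le> B b" for a b
    unfolding r_def using that by (intro card_mono) auto
  have smono: "r a < r b" if "B a < B b" "b \<in> {1..N}" for a b
  proof -
    have "{j'\<in>{1..N}. B j' \<le> B a} \<subseteq> {j'\<in>{1..N}. B j' \<le> B b}" using that by auto
    moreover have "b \<in> {j'\<in>{1..N}. B j' \<le> B b}" "b \<notin> {j'\<in>{1..N}. B j' \<le> B a}" using that by auto
    ultimately have "{j'\<in>{1..N}. B j' \<le> B a} \<subset> {j'\<in>{1..N}. B j' \<le> B b}" by blast
    moreover have "finite {j'\<in>{1..N}. B j' \<le> B b}" by simp
    ultimately show ?thesis unfolding r_def by (simp add: psubset_card_mono)
  qed
  have into: "r ` {1..N} \<subseteq> {1..N}"
  proof
    fix y assume "y \<in> r ` {1..N}"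
    then obtain j where j: "j \<in> {1..N}" "y = r j" by auto
    have "j \<in> {j'\<in>{1..N}. B j' \<le> B j}" using j by auto
    moreover have "finite {j'\<in>{1..N}. B j' \<le> B j}" by simp
    ultimately have "0 < r j" unfolding r_def by (metis card_gt_0_iff empty_iff)
    moreover have "r j \<le> card {1..N}" unfolding r_def by (intro card_mono) auto
    ultimately have "1 \<le> r j" "r j \<le> N" by auto
    then show "y \<in> {1..N}" using j by auto
  qed
  have injr: "inj_on r {1..N}"
  proof (rule inj_onI)
    fix a b assume ab: "a \<in> {1..N}" "b \<in> {1..N}" "r a = r b"
    show "a = b"
    proof (rule ccontr)
      assume "a \<noteq> b"
      then have "B a \<noteq> B b" using inj ab by auto
      then have "B a < B b \<or> B b < B a" by auto
      then show False using smono ab by fastforce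
    qed
  qed
  have bij: "bij_betw r {1..N} {1..N}"
    using injr into by (simp add: bij_betw_def card_image card_subset_eq)
  define m where "m = the_inv_into {1..N} r"
  have bm: "bij_betw m {1..N} {1..N}" unfolding m_def using bij by (rule bij_betw_the_inv_into)
  have rm: "r (m i) = i" if "i \<in> {1..N}" for i
    unfolding m_def using bij that by (meson bij_betw_def f_the_inv_into_f_bij_betw)
  have "B (m i) < B (m j)" if "1 \<le> i" "i < j" "j \<le> N" for i j
  proof (rule ccontr)
    assume "\<not> B (m i) < B (m j)"
    then have "r (m j) \<le> r (m i)" by (intro mono) auto
    then show False using rm that by auto
  qed
  then show ?thesis using bm unfolding sorting_perm_def by blast
qed

lemma rank_iff:
  fixes B :: "nat \<Rightarrow> real"
  assumes sp: "sorting_perm N B m" and k: "1 \<le> k" "k \<le> N"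
  shows "b \<le> B (m k) \<longleftrightarrow> card {j\<in>{1..N}. B j < b} < k"
proof -
  have bm: "bij_betw m {1..N} {1..N}" and lt: "\<And>i j. 1 \<le> i \<Longrightarrow> i < j \<Longrightarrow> j \<le> N \<Longrightarrow> B (m i) < B (m j)"
    using sp unfolding sorting_perm_def by auto
  have surj: "m ` {1..N} = {1..N}" and injm: "inj_on m {1..N}" using bm by (auto simp: bij_betw_def)
  have le: "B (m i) \<le> B (m j)" if "1 \<le> i" "i \<le> j" "j \<le> N" for i j
  proof (cases "i = j")
    case True then show ?thesis by simp
  next
    case False then have "i < j" using that by simp
    then show ?thesis using lt[of i j] that by simp
  qed
  show ?thesis
  proof
    assume b: "b \<le> B (m k)"
    have "{j\<in>{1..N}. B j < b} \<subseteq> m ` {1..<k}"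
    proof
      fix j assume j: "j \<in> {j\<in>{1..N}. B j < b}"
      then have "j \<in> m ` {1..N}" using surj by simp
      then obtain i where i: "i \<in> {1..N}" "j = m i" by (rule imageE)
      have "i < k"
      proof (rule ccontr)
        assume "\<not> i < k"
        then have "B (m k) \<le> B (m i)" using le[of k i] i k by simp
        then show False using j i b by simp
      qed
      then show "j \<in> m ` {1..<k}" using i by simp
    qed
    then have "card {j\<in>{1..N}. B j < b} \<le> card (m ` {1..<k})" by (intro card_mono) simp_all
    also have "\<dots> \<le> card {1..<k}" by (rule card_image_le) simp
    finally show "card {j\<in>{1..N}. B j < b} < k" using k by simp
  next
    assume c: "card {j\<in>{1..N}. B j < b} < k"
    show "b \<le> B (m k)"
    proof (rule ccontr)
      assume "\<not> b \<le> B (m k)"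
      then have bg: "B (m k) < b" by simp
      have sub: "m ` {1..k} \<subseteq> {j\<in>{1..N}. B j < b}"
      proof
        fix j assume "j \<in> m ` {1..k}"
        then obtain i where i: "i \<in> {1..k}" "j = m i" by (rule imageE)
        have "B (m i) \<le> B (m k)" using le[of i k] i k by simp
        moreover have "m i \<in> {1..N}" using i k surj by auto
        ultimately show "j \<in> {j\<in>{1..N}. B j < b}" using i bg by simp
      qed
      have "inj_on m {1..k}" using k by (intro inj_on_subset[OF injm]) simp
      then have "card (m ` {1..k}) = k" by (simp add: card_image)
      moreover have "card (m ` {1..k}) \<le> card {j\<in>{1..N}. B j < b}" using sub by (intro card_mono) simp_all
      ultimately show False using c by simp
    qed
  qed
qed

lemma card_filter_sum:
  assumes "finite I"
  shows "card {j\<in>I. Q j} = (\<Sum>j\<in>I. if Q j then 1 else 0 :: nat)"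
    and "real (card {j\<in>I. Q j}) = (\<Sum>j\<in>I. if Q j then 1 else 0 :: real)"
  using assms by (simp_all add: sum.If_cases Int_def)

lemma card_swap:
  assumes "bij_betw \<sigma> I I" "finite I"
  shows "card {j\<in>I. Q (\<sigma> j)} = card {j\<in>I. Q j}"
proof -
  have "card {j\<in>I. Q (\<sigma> j)} = (\<Sum>j\<in>I. if Q (\<sigma> j) then 1 else 0)"
    by (rule card_filter_sum(1)[OF assms(2), of "\<lambda>j. Q (\<sigma> j)"])
  also have "\<dots> = (\<Sum>j\<in>I. if Q j then 1 else 0)"
    using sum.reindex_bij_betw[OF assms(1), of "\<lambda>j. if Q j then 1 else 0"] by simp
  also have "\<dots> = card {j\<in>I. Q j}" by (rule card_filter_sum(1)[OF assms(2), of Q, symmetric])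
  finally show ?thesis .
qed

lemma abs_le_sqrt_iff: "0 \<le> (a::real) \<Longrightarrow> \<bar>t\<bar> \<le> sqrt a \<longleftrightarrow> t\<^sup>2 \<le> a"
  by (metis real_sqrt_abs real_sqrt_le_iff)

theorem theorem1:
  fixes M :: "'a measure"
    and N :: nat
    and X :: "nat \<Rightarrow> 'a \<Rightarrow> real ^ 'd"
    and Y :: "nat \<Rightarrow> 'a \<Rightarrow> real"
    and f :: "real ^ 'd \<Rightarrow> real"
    and \<phi> :: "real ^ 'd \<Rightarrow> real \<Rightarrow> real"
    and \<phi>' :: "real ^ 'd \<Rightarrow> real \<Rightarrow> real"
  assumes prob: "prob_space M"
    and N_pos: "N \<ge> 1"
    and indep: "prob_space.indep_vars M (\<lambda>_. borel) (\<lambda>n \<omega>. (X n \<omega>, Y n \<omega>)) {1..N+1}"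
    and ident: "\<forall>n\<in>{1..N+1}. distr M borel (\<lambda>\<omega>. (X n \<omega>, Y n \<omega>)) = distr M borel (\<lambda>\<omega>. (X 1 \<omega>, Y 1 \<omega>))"
    and f_meas: "f \<in> borel_measurable borel"
    and \<phi>_meas: "(\<lambda>(x, a). \<phi> x a) \<in> borel_measurable borel"
    and \<phi>_deriv: "\<forall>x. \<forall>a\<ge>0. (\<phi> x has_real_derivative \<phi>' x a) (at a within {0..}) \<and> \<phi>' x a > 0"
    and \<phi>_range: "\<forall>x x'. \<phi> x ` {0..} = \<phi> x' ` {0..}"
    and distinct: "\<forall>\<omega>\<in>space M. \<forall>n\<in>{1..N}. \<forall>n'\<in>{1..N}. n \<noteq> n' \<longrightarrow>
                     tscore f \<phi> (X n \<omega>) (Y n \<omega>) \<noteq> tscore f \<phi> (X n' \<omega>) (Y n' \<omega>)"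
  shows "(\<forall>\<omega>\<in>space M. \<exists>m. sorting_perm N (\<lambda>n. tscore f \<phi> (X n \<omega>) (Y n \<omega>)) m)
       \<and> (\<forall>m :: 'a \<Rightarrow> nat \<Rightarrow> nat.
            (\<forall>\<omega>\<in>space M. sorting_perm N (\<lambda>n. tscore f \<phi> (X n \<omega>) (Y n \<omega>)) (m \<omega>)) \<longrightarrow>
            (\<forall>\<alpha>::real. 1 / real (N + 1) \<le> \<alpha> \<and> \<alpha> < 1 \<longrightarrow>
              (let k = nat \<lceil>real (N + 1) * (1 - \<alpha>)\<rceil> in
               measure M {\<omega> \<in> space M.
                  (let \<Delta> = sqrt (the_inv_into {0..} (\<phi> (X (N+1) \<omega>))
                                 (tscore f \<phi> (X (m \<omega> k) \<omega>) (Y (m \<omega> k) \<omega>)))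
                   in Y (N+1) \<omega> \<in> {f (X (N+1) \<omega>) - \<Delta> .. f (X (N+1) \<omega>) + \<Delta>})}
               \<ge> 1 - \<alpha>)))"
proof -
  interpret prob_space M by (rule prob)
  define Z where "Z = (\<lambda>n \<omega>. (X n \<omega>, Y n \<omega>))"
  define s where "s z = tscore f \<phi> (fst z) (snd z)" for z :: "(real^'d) \<times> real"
  define I where "I = {1..N+1}"
  have finI: "finite I" and cardI: "card I = N + 1" unfolding I_def by auto
  have part1: "\<forall>\<omega>\<in>space M. \<exists>m. sorting_perm N (\<lambda>n. tscore f \<phi> (X n \<omega>) (Y n \<omega>)) m"
    using distinct by (auto intro!: sorting_exists)
  have phi_iff: "\<phi> x a \<le> \<phi> x b \<longleftrightarrow> a \<le> b" if "0 \<le> a" "0 \<le> b" for x a b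
    using phi_mono_iff[of "\<phi> x" "\<phi>' x" a b] \<phi>_deriv that by blast
  have inj: "inj_on (\<phi> x) {0..}" for x
  proof (rule inj_onI)
    fix a b assume "a \<in> {0..}" "b \<in> {0..}" "\<phi> x a = \<phi> x b"
    then show "a = b" using phi_iff[of a b x] phi_iff[of b a x] by auto
  qed
  show ?thesis
  proof (intro conjI part1 allI impI)
    fix m :: "'a \<Rightarrow> nat \<Rightarrow> nat" and \<alpha> :: real
    assume sp: "\<forall>\<omega>\<in>space M. sorting_perm N (\<lambda>n. tscore f \<phi> (X n \<omega>) (Y n \<omega>)) (m \<omega>)"
      and \<alpha>: "1 / real (N + 1) \<le> \<alpha> \<and> \<alpha> < 1"
    define k where "k = nat \<lceil>real (N + 1) * (1 - \<alpha>)\<rceil>"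
    have x_pos: "0 < real (N+1) * (1-\<alpha>)" using \<alpha> by simp
    have "1 \<le> real (N+1) * \<alpha>" using \<alpha> by (simp add: field_simps)
    then have x_le: "real (N+1) * (1-\<alpha>) \<le> real N" by (simp add: algebra_simps)
    have "0 < real_of_int \<lceil>real (N + 1) * (1 - \<alpha>)\<rceil>"
      using x_pos le_of_int_ceiling[of "real (N + 1) * (1 - \<alpha>)"] by linarith
    then have "int 1 \<le> \<lceil>real (N + 1) * (1 - \<alpha>)\<rceil>" by simp
    then have k1: "1 \<le> k" unfolding k_def by (subst le_nat_iff) auto
    have "\<lceil>real (N + 1) * (1 - \<alpha>)\<rceil> \<le> int N" using x_le by (intro ceiling_le) simp
    then have kN: "k \<le> N" unfolding k_def using x_le by simp
    have c0: "0 \<le> \<lceil>real (N + 1) * (1 - \<alpha>)\<rceil>" using x_pos by simp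
    have "real k = real_of_int \<lceil>real (N + 1) * (1 - \<alpha>)\<rceil>" unfolding k_def using c0 by simp
    then have kr: "real (N+1) * (1-\<alpha>) \<le> real k" by (simp add: le_of_int_ceiling)
    have rv: "Z i \<in> borel_measurable M" if "i \<in> I" for i
      using indep that unfolding indep_vars_def2 Z_def I_def by auto
    define D where "D = distr M borel (Z 1)"
    define P where "P = (\<Pi>\<^sub>M i\<in>I. D)"
    have probD: "prob_space D" unfolding D_def
      using rv[of 1] by (intro prob_space_distr) (auto simp: I_def)
    have setsD: "sets D = sets borel" unfolding D_def by simp
    interpret P: prob_space P unfolding P_def using probD by (intro prob_space_PiM) auto
    define Zr where "Zr \<omega> = (\<lambda>i\<in>I. Z i \<omega>)" for \<omega>
    have Zr_meas: "Zr \<in> measurable M P" unfolding Zr_def P_def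
      by (intro measurable_restrict) (use rv setsD in \<open>auto cong: measurable_cong_sets\<close>)
    have distrZ: "distr M P Zr = P"
    proof -
      have ind: "indep_vars (\<lambda>_. borel) Z I" using indep unfolding Z_def I_def .
      have Ine: "I \<noteq> {}" by (simp add: I_def)
      have eq1: "distr M (\<Pi>\<^sub>M i\<in>I. borel) Zr = (\<Pi>\<^sub>M i\<in>I. distr M borel (Z i))"
        unfolding Zr_def using indep_vars_iff_distr_eq_PiM'[where I=I and M'="\<lambda>_. borel" and X=Z, OF Ine rv] ind
        by blast
      have eq2: "(\<Pi>\<^sub>M i\<in>I. distr M borel (Z i)) = P"
        unfolding P_def D_def
      proof (intro PiM_cong refl)
        fix i assume "i \<in> I"
        then show "distr M borel (Z i) = distr M borel (Z 1)"
          using ident unfolding I_def Z_def by blast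
      qed
      have sP: "sets (\<Pi>\<^sub>M i\<in>I. borel) = sets P"
        unfolding P_def by (intro sets_PiM_cong refl) (simp add: setsD)
      have eq3: "distr M (\<Pi>\<^sub>M i\<in>I. borel) Zr = distr M P Zr"
        by (rule distr_cong[OF refl sP refl])
      show ?thesis using eq1 eq2 eq3 by simp
    qed
    have s_meas: "s \<in> borel_measurable borel"
    proof -
      have g: "(\<lambda>z::(real^'d) \<times> real. (fst z, (f (fst z) - snd z)\<^sup>2)) \<in> borel_measurable borel"
        unfolding borel_prod[symmetric] using f_meas by measurable
      have "(\<lambda>(x, a). \<phi> x a) \<circ> (\<lambda>z::(real^'d) \<times> real. (fst z, (f (fst z) - snd z)\<^sup>2)) \<in> borel_measurable borel"
        by (rule measurable_comp[OF g \<phi>_meas])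
      moreover have "(\<lambda>(x, a). \<phi> x a) \<circ> (\<lambda>z::(real^'d) \<times> real. (fst z, (f (fst z) - snd z)\<^sup>2)) = s"
        by (auto simp: s_def tscore_def fun_eq_iff)
      ultimately show ?thesis by simp
    qed
    have sD: "s \<in> borel_measurable D" using s_meas setsD by (simp cong: measurable_cong_sets)
    have sj: "(\<lambda>z. s (z j)) \<in> borel_measurable P" if "j \<in> I" for j
      unfolding P_def by (rule measurable_comp[OF measurable_component_singleton[OF that] sD, unfolded comp_def])
    define G where "G i = {z \<in> space P. card {j\<in>I. s (z j) < s (z i)} < k}" for i
    note cardsum = card_filter_sum(2)[OF finI]
    have G_sets: "G i \<in> sets P" if "i \<in> I" for i
    proof -
      have "(\<lambda>z. (\<Sum>j\<in>I. if s (z j) < s (z i) then 1 else 0 :: real)) \<in> borel_measurable P"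
        using sj that by (intro borel_measurable_sum measurable_If borel_measurable_less) auto
      then have "{z \<in> space P. (\<Sum>j\<in>I. if s (z j) < s (z i) then 1 else 0 :: real) < real k} \<in> sets P"
        by (intro borel_measurable_less) auto
      moreover have "G i = {z \<in> space P. (\<Sum>j\<in>I. if s (z j) < s (z i) then 1 else 0 :: real) < real k}"
        unfolding G_def by (simp only: cardsum[symmetric] of_nat_less_iff)
      ultimately show ?thesis by simp
    qed
    have Gsym: "P.prob (G i) = P.prob (G (N+1))" if i: "i \<in> I" for i
    proof -
      define \<sigma> where "\<sigma> n = (if n = i then N+1 else if n = N+1 then i else n)" for n
      have bij: "bij_betw \<sigma> I I"
        by (rule bij_betw_byWitness[of I \<sigma> \<sigma>]) (use i in \<open>auto simp: \<sigma>_def I_def\<close>)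
      have inj\<sigma>: "inj_on \<sigma> I" and pi: "\<sigma> \<in> I \<rightarrow> I" using bij by (auto simp: bij_betw_def)
      define t where "t z = (\<lambda>n\<in>I. z (\<sigma> n))" for z :: "nat \<Rightarrow> (real^'d) \<times> real"
      have dt: "distr P P t = P"
        unfolding P_def t_def using distr_PiM_reindex[of I "\<lambda>_. D" \<sigma> I] probD inj\<sigma> pi by simp
      have tm: "t \<in> measurable P P" unfolding P_def t_def
        using pi by (intro measurable_restrict measurable_component_singleton) auto
      have "P.prob (G (N+1)) = measure (distr P P t) (G (N+1))" using dt by simp
      also have "\<dots> = P.prob (t -` G (N+1) \<inter> space P)"
        using tm G_sets[of "N+1"] by (intro measure_distr) (auto simp: I_def)
      also have "t -` G (N+1) \<inter> space P = G i"
      proof -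
        have "card {j\<in>I. s (t z j) < s (t z (N+1))} = card {j\<in>I. s (z j) < s (z i)}" for z
        proof -
          have "{j\<in>I. s (t z j) < s (t z (N+1))} = {j\<in>I. s (z (\<sigma> j)) < s (z i)}"
            by (auto simp: t_def \<sigma>_def I_def)
          then show ?thesis using card_swap[OF bij finI, of "\<lambda>j. s (z j) < s (z i)"] by simp
        qed
        then show ?thesis unfolding G_def using measurable_space[OF tm] by auto
      qed
      finally show ?thesis by simp
    qed
    have sumG: "real k \<le> (\<Sum>i\<in>I. P.prob (G i))"
    proof -
      have intG: "integrable P (indicator (G i) :: _ \<Rightarrow> real)" if "i \<in> I" for i
        using G_sets[OF that] by (intro integrable_real_indicator) (simp_all add: P.emeasure_finite less_top[symmetric])
      have "(\<integral>z. (\<Sum>i\<in>I. indicator (G i) z :: real) \<partial>P) = (\<Sum>i\<in>I. (\<integral>z. indicator (G i) z \<partial>P))"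
        using Bochner_Integration.integral_sum[where I=I and M=P and f="\<lambda>i. indicator (G i) :: _ \<Rightarrow> real", OF intG] by simp
      also have "\<dots> = (\<Sum>i\<in>I. P.prob (G i))"
      proof (rule sum.cong[OF refl])
        fix i assume "i \<in> I"
        then have "G i \<inter> space P = G i" using G_sets sets.sets_into_space by blast
        then show "(\<integral>z. (indicator (G i) z :: real) \<partial>P) = P.prob (G i)"
          using Bochner_Integration.integral_indicator[of P "G i"] by simp
      qed
      finally have "(\<Sum>i\<in>I. P.prob (G i)) = (\<integral>z. (\<Sum>i\<in>I. indicator (G i) z :: real) \<partial>P)" by simp
      moreover have "real k \<le> (\<integral>z. (\<Sum>i\<in>I. indicator (G i) z :: real) \<partial>P)"
      proof (rule P.integral_ge_const)
        show "integrable P (\<lambda>z. \<Sum>i\<in>I. indicator (G i) z :: real)"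
          by (rule Bochner_Integration.integrable_sum) (rule intG)
        show "AE z in P. real k \<le> (\<Sum>i\<in>I. indicator (G i) z :: real)"
        proof (rule AE_I2)
          fix z assume z: "z \<in> space P"
          have "(\<Sum>i\<in>I. indicator (G i) z :: real) = (\<Sum>i\<in>I. if card {j\<in>I. s (z j) < s (z i)} < k then 1 else 0)"
            using z by (intro sum.cong) (auto simp: G_def indicator_def)
          also have "\<dots> = real (card {i\<in>I. card {j\<in>I. s (z j) < s (z i)} < k})"
            by (rule cardsum[symmetric])
          finally show "real k \<le> (\<Sum>i\<in>I. indicator (G i) z :: real)"
            using count_ge[OF finI, of k "\<lambda>j. s (z j)"] cardI kN by simp
        qed
      qed
      ultimately show ?thesis by simp
    qed
    have q: "real k \<le> real (N+1) * P.prob (G (N+1))"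
      using sumG Gsym cardI by simp
    have event: "{\<omega> \<in> space M.
                  (let \<Delta> = sqrt (the_inv_into {0..} (\<phi> (X (N+1) \<omega>))
                                 (tscore f \<phi> (X (m \<omega> k) \<omega>) (Y (m \<omega> k) \<omega>)))
                   in Y (N+1) \<omega> \<in> {f (X (N+1) \<omega>) - \<Delta> .. f (X (N+1) \<omega>) + \<Delta>})}
               = Zr -` G (N+1) \<inter> space M"
    proof -
      have "(let \<Delta> = sqrt (the_inv_into {0..} (\<phi> (X (N+1) \<omega>))
                                 (tscore f \<phi> (X (m \<omega> k) \<omega>) (Y (m \<omega> k) \<omega>)))
                   in Y (N+1) \<omega> \<in> {f (X (N+1) \<omega>) - \<Delta> .. f (X (N+1) \<omega>) + \<Delta>})
            \<longleftrightarrow> Zr \<omega> \<in> G (N+1)" if \<omega>: "\<omega> \<in> space M" for \<omega>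
      proof -
        let ?x = "X (N+1) \<omega>"
        let ?B = "\<lambda>n. tscore f \<phi> (X n \<omega>) (Y n \<omega>)"
        let ?b = "?B (m \<omega> k)"
        have spw: "sorting_perm N ?B (m \<omega>)" using sp \<omega> by auto
        have "m \<omega> k \<in> {1..N}" using spw k1 kN unfolding sorting_perm_def bij_betw_def by auto
        have "?b \<in> \<phi> (X (m \<omega> k) \<omega>) ` {0..}" by (auto simp: tscore_def)
        then have bin: "?b \<in> \<phi> ?x ` {0..}" using \<phi>_range by metis
        define a where "a = the_inv_into {0..} (\<phi> ?x) ?b"
        have a0: "0 \<le> a" unfolding a_def using the_inv_into_into[OF inj bin, of "{0..}"] by auto
        have fa: "\<phi> ?x a = ?b" unfolding a_def by (rule f_the_inv_into_f[OF inj bin])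
        have "(let \<Delta> = sqrt a in Y (N+1) \<omega> \<in> {f ?x - \<Delta> .. f ?x + \<Delta>})
              \<longleftrightarrow> \<bar>f ?x - Y (N+1) \<omega>\<bar> \<le> sqrt a" by (auto simp: Let_def abs_le_iff)
        also have "\<dots> \<longleftrightarrow> (f ?x - Y (N+1) \<omega>)\<^sup>2 \<le> a" by (rule abs_le_sqrt_iff[OF a0])
        also have "\<dots> \<longleftrightarrow> ?B (N+1) \<le> ?b"
          using phi_iff[of "(f ?x - Y (N+1) \<omega>)\<^sup>2" a ?x] a0 fa by (simp add: tscore_def)
        also have "\<dots> \<longleftrightarrow> card {j\<in>{1..N}. ?B j < ?B (N+1)} < k"
          by (rule rank_iff[OF spw k1 kN])
        also have "{j\<in>{1..N}. ?B j < ?B (N+1)} = {j\<in>I. s (Zr \<omega> j) < s (Zr \<omega> (N+1))}"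
          by (auto simp: I_def Zr_def Z_def s_def le_Suc_eq)
        also have "card \<dots> < k \<longleftrightarrow> Zr \<omega> \<in> G (N+1)"
          using measurable_space[OF Zr_meas \<omega>] by (simp add: G_def)
        finally show ?thesis by (simp add: a_def)
      qed
      then show ?thesis by auto
    qed
    have "measure M (Zr -` G (N+1) \<inter> space M) = P.prob (G (N+1))"
      using measure_distr[OF Zr_meas G_sets[of "N+1"]] distrZ by (simp add: I_def)
    moreover have "1 - \<alpha> \<le> P.prob (G (N+1))"
    proof -
      have "real (N+1) * (1-\<alpha>) \<le> real (N+1) * P.prob (G (N+1))" using kr q by linarith
      then show ?thesis by (simp add: mult_le_cancel_left_pos)
    qed
    ultimately show "let k = nat \<lceil>real (N + 1) * (1 - \<alpha>)\<rceil> in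
               measure M {\<omega> \<in> space M.
                  (let \<Delta> = sqrt (the_inv_into {0..} (\<phi> (X (N+1) \<omega>))
                                 (tscore f \<phi> (X (m \<omega> k) \<omega>) (Y (m \<omega> k) \<omega>)))
                   in Y (N+1) \<omega> \<in> {f (X (N+1) \<omega>) - \<Delta> .. f (X (N+1) \<omega>) + \<Delta>})}
               \<ge> 1 - \<alpha>"
      unfolding Let_def[of "nat _"] k_def[symmetric] using event by simp
  qed
qed

end
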